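(* Let $0<\tau<1$, $x\in\mathbb{Z}$, $t\ge0$, and $$\varphi(\eta)=\Big(\frac{1-\eta}{1-\tau\eta}\Big)^{x}e^{\left[\frac{1}{1-\eta}-\frac{1}{1-\tau\eta}\right]t}\cdot\frac{1}{\tau^{-1}-\eta}.$$ Let $\Gamma$ be a closed curve going once counterclockwise around $\eta=1$, with $\eta=\tau^{-1}$ on the outside, which is star-shaped with respect to $\eta=0$. Let $K_1$ be the operator on $L^2(\Gamma)$ with kernel $K_1(\eta,\eta')=\frac{\varphi(\tau\eta)}{\eta'-\tau\eta}$. Then for $\lambda\in\mathbb{C}$, $$\det(I-\lambda K_1)=\prod_{k=1}^{\infty}(1-\lambda\tau^k).$$
   Context: $\det(I-\lambda K_1)$ denotes the Fredholm determinant on $L^2(\Gamma)$, where integrals along $\Gamma$ include the factor $\frac{1}{2\pi i}$. *)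

theory Defs
  imports "HOL-Complex_Analysis.Complex_Analysis"
begin

fun multi_cint :: "(real \<Rightarrow> complex) \<Rightarrow> nat \<Rightarrow> ((nat \<Rightarrow> complex) \<Rightarrow> complex) \<Rightarrow> complex" where
  "multi_cint \<Gamma> 0 F = F (\<lambda>_. 0)"
| "multi_cint \<Gamma> (Suc n) F =
     contour_integral \<Gamma> (\<lambda>z. multi_cint \<Gamma> n (\<lambda>v. F (v(n := z)))) / (2 * pi * \<i>)"

definition kernel_det :: "(complex \<Rightarrow> complex \<Rightarrow> complex) \<Rightarrow> nat \<Rightarrow> (nat \<Rightarrow> complex) \<Rightarrow> complex" where
  "kernel_det K n v = (\<Sum>p | p permutes {..<n}. of_int (sign p) * (\<Prod>i<n. K (v i) (v (p i))))"

definition fredholm_term :: "(real \<Rightarrow> complex) \<Rightarrow> (complex \<Rightarrow> complex \<Rightarrow> complex) \<Rightarrow> complex \<Rightarrow> nat \<Rightarrow> complex" where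
  "fredholm_term \<Gamma> K lam n = (- lam) ^ n / of_nat (fact n) * multi_cint \<Gamma> n (kernel_det K n)"

definition fredholm_det :: "(real \<Rightarrow> complex) \<Rightarrow> (complex \<Rightarrow> complex \<Rightarrow> complex) \<Rightarrow> complex \<Rightarrow> complex" where
  "fredholm_det \<Gamma> K lam = (\<Sum>n. fredholm_term \<Gamma> K lam n)"

definition phi :: "real \<Rightarrow> int \<Rightarrow> real \<Rightarrow> complex \<Rightarrow> complex" where
  "phi \<tau> x t \<eta> = ((1 - \<eta>) / (1 - of_real \<tau> * \<eta>)) powi x
      * exp ((1 / (1 - \<eta>) - 1 / (1 - of_real \<tau> * \<eta>)) * of_real t)
      * (1 / (1 / of_real \<tau> - \<eta>))"

definition K1 :: "real \<Rightarrow> int \<Rightarrow> real \<Rightarrow> complex \<Rightarrow> complex \<Rightarrow> complex" where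
  "K1 \<tau> x t \<eta> \<eta>' = phi \<tau> x t (of_real \<tau> * \<eta>) / (\<eta>' - of_real \<tau> * \<eta>)"

end

theory Submission
  imports Defs "HOL-Combinatorics.Multiset_Permutations"
begin


definition shift :: "(nat \<Rightarrow> complex) \<Rightarrow> complex \<Rightarrow> nat \<Rightarrow> complex" where
  "shift w z = (\<lambda>i. case i of 0 \<Rightarrow> z | Suc j \<Rightarrow> w j)"

lemma shift_upd: "shift (v(n := z')) z = (shift v z)(Suc n := z')"
  by (auto simp: shift_def fun_eq_iff split: nat.split)

lemma multi_cint_inner:
  "multi_cint \<Gamma> (Suc n) F = multi_cint \<Gamma> n (\<lambda>w. contour_integral \<Gamma> (\<lambda>z. F (shift w z)) / (2*pi*\<i>))"
proof (induction n arbitrary: F)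
  case 0
  have "\<And>z. (\<lambda>_. 0)(0 := z) = shift (\<lambda>_. 0) z" by (auto simp: shift_def fun_eq_iff split: nat.split)
  then show ?case by simp
next
  case (Suc n)
  have "multi_cint \<Gamma> (Suc (Suc n)) F = contour_integral \<Gamma> (\<lambda>z'. multi_cint \<Gamma> (Suc n) (\<lambda>v. F (v(Suc n := z')))) / (2*pi*\<i>)"
    by simp
  also have "\<dots> = contour_integral \<Gamma> (\<lambda>z'. multi_cint \<Gamma> n (\<lambda>w. contour_integral \<Gamma> (\<lambda>z. F ((shift w z)(Suc n := z'))) / (2*pi*\<i>))) / (2*pi*\<i>)"
    by (simp only: Suc.IH)
  also have "\<dots> = multi_cint \<Gamma> (Suc n) (\<lambda>w. contour_integral \<Gamma> (\<lambda>z. F (shift w z)) / (2*pi*\<i>))"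
    by (simp add: shift_upd)
  finally show ?case .
qed

definition box :: "complex set \<Rightarrow> nat \<Rightarrow> (nat \<Rightarrow> complex) \<Rightarrow> bool" where
  "box P n v \<longleftrightarrow> (\<forall>i<n. v i \<in> P) \<and> (\<forall>i\<ge>n. v i = 0)"

lemma box_upd: "box P n v \<Longrightarrow> z \<in> P \<Longrightarrow> box P (Suc n) (v(n := z))"
  by (auto simp: box_def less_Suc_eq)

lemma box_shift: "box P n w \<Longrightarrow> z \<in> P \<Longrightarrow> box P (Suc n) (shift w z)"
  by (auto simp: box_def shift_def split: nat.split)

lemma multi_cint_cong:
  "(\<And>v. box (path_image \<Gamma>) n v \<Longrightarrow> F v = G v) \<Longrightarrow> multi_cint \<Gamma> n F = multi_cint \<Gamma> n G"
proof (induction n arbitrary: F G)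
  case 0
  then show ?case using 0[of "\<lambda>_. 0"] by (simp add: box_def)
next
  case (Suc n)
  have "contour_integral \<Gamma> (\<lambda>z. multi_cint \<Gamma> n (\<lambda>v. F (v(n := z)))) =
        contour_integral \<Gamma> (\<lambda>z. multi_cint \<Gamma> n (\<lambda>v. G (v(n := z))))"
    by (rule contour_integral_eq, rule Suc.IH, rule Suc.prems, erule box_upd)
  then show ?case by simp
qed

fun MI :: "(real \<Rightarrow> complex) \<Rightarrow> nat \<Rightarrow> ((nat \<Rightarrow> complex) \<Rightarrow> complex) \<Rightarrow> complex \<Rightarrow> bool" where
  "MI \<Gamma> 0 F V \<longleftrightarrow> V = F (\<lambda>_. 0)"
| "MI \<Gamma> (Suc n) F V \<longleftrightarrow> (\<exists>G. (\<forall>w. box (path_image \<Gamma>) n w \<longrightarrow>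
       ((\<lambda>z. F (shift w z)) has_contour_integral (2*pi*\<i> * G w)) \<Gamma>) \<and> MI \<Gamma> n G V)"

lemma MI_multi_cint: "MI \<Gamma> n F V \<Longrightarrow> multi_cint \<Gamma> n F = V"
proof (induction n arbitrary: F V)
  case 0
  then show ?case by simp
next
  case (Suc n)
  then obtain G where G: "\<And>w. box (path_image \<Gamma>) n w \<Longrightarrow>
       ((\<lambda>z. F (shift w z)) has_contour_integral (2*pi*\<i> * G w)) \<Gamma>" and M: "MI \<Gamma> n G V" by auto
  have "multi_cint \<Gamma> (Suc n) F = multi_cint \<Gamma> n G"
    apply (subst multi_cint_inner)
    apply (rule multi_cint_cong)
    using G contour_integral_unique by fastforce
  then show ?case using Suc.IH[OF M] by simp
qed

lemma MI_lin2:
  "MI \<Gamma> n F V \<Longrightarrow> MI \<Gamma> n G W \<Longrightarrow> MI \<Gamma> n (\<lambda>v. a * F v + b * G v) (a * V + b * W)"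
proof (induction n arbitrary: F G V W)
  case 0
  then show ?case by simp
next
  case (Suc n)
  from Suc.prems(1) obtain F' where F': "\<And>w. box (path_image \<Gamma>) n w \<Longrightarrow>
       ((\<lambda>z. F (shift w z)) has_contour_integral (2*pi*\<i> * F' w)) \<Gamma>" and M1: "MI \<Gamma> n F' V" by auto
  from Suc.prems(2) obtain G' where G': "\<And>w. box (path_image \<Gamma>) n w \<Longrightarrow>
       ((\<lambda>z. G (shift w z)) has_contour_integral (2*pi*\<i> * G' w)) \<Gamma>" and M2: "MI \<Gamma> n G' W" by auto
  show ?case
  proof (simp only: MI.simps, intro exI conjI allI impI)
    fix w assume "box (path_image \<Gamma>) n w"
    from has_contour_integral_add[OF has_contour_integral_lmul[OF F'[OF this], of a]
       has_contour_integral_lmul[OF G'[OF this], of b]]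
    show "((\<lambda>z. a * F (shift w z) + b * G (shift w z)) has_contour_integral
           (2*pi*\<i> * (a * F' w + b * G' w))) \<Gamma>"
      by (simp add: algebra_simps)
  next
    show "MI \<Gamma> n (\<lambda>w. a * F' w + b * G' w) (a * V + b * W)"
      by (rule Suc.IH[OF M1 M2])
  qed
qed

lemma MI_sum:
  "finite B \<Longrightarrow> (\<And>b. b \<in> B \<Longrightarrow> MI \<Gamma> n (F b) (V b)) \<Longrightarrow>
   MI \<Gamma> n (\<lambda>v. \<Sum>b\<in>B. F b v) (\<Sum>b\<in>B. V b)"
proof (induction B rule: finite_induct)
  case empty
  have "MI \<Gamma> n (\<lambda>v. 0) 0"
  proof (induction n)
    case (Suc n) then show ?case by (auto intro!: exI[of _ "\<lambda>_. 0"] has_contour_integral_0)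
  qed simp
  then show ?case by simp
next
  case (insert b B)
  have "MI \<Gamma> n (\<lambda>v. 1 * F b v + 1 * (\<Sum>b\<in>B. F b v)) (1 * V b + 1 * (\<Sum>b\<in>B. V b))"
    by (rule MI_lin2) (use insert in auto)
  then show ?case using insert by simp
qed



locale geo =
  fixes \<tau> :: real and \<Gamma> :: "real \<Rightarrow> complex"
  assumes tau0: "0 < \<tau>" and tau1: "\<tau> < 1"
    and vp: "valid_path \<Gamma>" and sp: "simple_path \<Gamma>" and loop: "pathfinish \<Gamma> = pathstart \<Gamma>"
    and one_np: "1 \<notin> path_image \<Gamma>" and w1: "winding_number \<Gamma> 1 = 1"
    and it_np: "1 / complex_of_real \<tau> \<notin> path_image \<Gamma>"
    and wit: "winding_number \<Gamma> (1 / complex_of_real \<tau>) = 0"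
    and star: "\<forall>z\<in>path_image \<Gamma>. \<forall>s\<in>{0..<1::real}. complex_of_real s * z \<in> inside (path_image \<Gamma>)"
begin

abbreviation "P \<equiv> path_image \<Gamma>"
abbreviation "In \<equiv> inside P"

lemma pth: "path \<Gamma>" using vp valid_path_imp_path by blast

lemma closedP: "closed P" using pth closed_path_image by blast

lemma wn_out: "z \<notin> In \<Longrightarrow> z \<notin> P \<Longrightarrow> winding_number \<Gamma> z = 0"
  by (rule winding_number_zero_in_outside[OF pth loop]) (auto simp: outside_inside)

lemma one_in: "1 \<in> In"
  using wn_out w1 one_np by fastforce

lemma wn_in: "z \<in> In \<Longrightarrow> winding_number \<Gamma> z = 1"
proof -
  assume z: "z \<in> In"
  show ?thesis
  proof (rule simple_closed_path_winding_number_inside[OF sp])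
    assume "\<And>z. z \<in> In \<Longrightarrow> winding_number \<Gamma> z = 1" then show ?thesis using z by blast
  next
    assume "\<And>z. z \<in> In \<Longrightarrow> winding_number \<Gamma> z = -1"
    then have "winding_number \<Gamma> 1 = -1" using one_in by blast
    then show ?thesis using w1 by simp
  qed
qed

lemma In_P_disj: "z \<in> In \<Longrightarrow> z \<notin> P"
  using inside_no_overlap by blast

lemma scale_In:
  assumes z: "z \<in> In" and s: "0 \<le> s" "s < 1"
  shows "complex_of_real s * z \<in> In"
proof (cases "z = 0")
  case True
  then show ?thesis using z by simp
next
  case False
  have bdd: "bounded In" using bounded_inside pth bounded_path_image by blast
  then obtain B where B: "B > 0" "\<And>y. y \<in> In \<Longrightarrow> norm y \<le> B" by (meson bounded_pos)
  define R where "R = B / norm z + 1"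
  have nz: "norm z > 0" using False by simp
  have R1: "R \<ge> 1" using B nz by (simp add: R_def)
  have "norm (complex_of_real R * z) = R * norm z"
    using R1 by (simp add: norm_mult)
  also have "\<dots> = B + norm z" using nz by (simp add: R_def field_simps)
  finally have "norm (complex_of_real R * z) = B + norm z" .
  then have Rout: "complex_of_real R * z \<notin> In" using B nz by force
  define S where "S = closed_segment z (complex_of_real R * z)"
  have "S \<inter> frontier In \<noteq> {}"
  proof (rule connected_Int_frontier)
    show "connected S" unfolding S_def by (rule connected_segment)
    show "S \<inter> In \<noteq> {}" using z unfolding S_def by auto
    show "S - In \<noteq> {}" using Rout unfolding S_def by auto
  qed
  then obtain y where yS: "y \<in> S" and yf: "y \<in> frontier In" by blast
  have yP: "y \<in> P" using yf frontier_inside_subset[OF closedP] by blast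
  from yS obtain u where u: "0 \<le> u" "u \<le> 1" "y = (1 - u) *\<^sub>R z + u *\<^sub>R (complex_of_real R * z)"
    unfolding S_def in_segment by blast
  define r where "r = 1 - u + u * R"
  have r1: "r \<ge> 1" using u R1 unfolding r_def using mult_left_mono[of 1 R u] by simp
  have yr: "y = complex_of_real r * z" using u(3) by (simp add: r_def scaleR_conv_of_real algebra_simps)
  have "s / r \<in> {0..<1}" using s r1 by (auto simp: divide_simps)
  then have "complex_of_real (s / r) * y \<in> In"
    using star yP by blast
  moreover have "complex_of_real (s / r) * y = complex_of_real s * z"
    using r1 yr by (simp add: field_simps)
  ultimately show ?thesis by simp
qed

lemma scale_InP:
  assumes "z \<in> In \<or> z \<in> P" "0 \<le> s" "s < 1"
  shows "complex_of_real s * z \<in> In"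
  using assms scale_In star by auto

lemma zero_In: "0 \<in> In"
  using scale_InP[of 1 0] one_in by simp

lemma itau_out: "1 / complex_of_real \<tau> \<notin> In"
  using wn_in wit by force

lemma pow_out:
  assumes "k \<ge> 1"
  shows "(1 / complex_of_real \<tau>) ^ k \<notin> In \<and> (1 / complex_of_real \<tau>) ^ k \<notin> P"
proof (rule ccontr)
  assume "\<not> ?thesis"
  then have h: "(1 / complex_of_real \<tau>) ^ k \<in> In \<or> (1 / complex_of_real \<tau>) ^ k \<in> P" by blast
  show False
  proof (cases "k = 1")
    case True then show ?thesis using h itau_out it_np by simp
  next
    case False
    then have "0 \<le> \<tau> ^ (k - 1)" "\<tau> ^ (k - 1) < 1" using tau0 tau1 assms by (auto simp: power_less_one_iff)
    from scale_InP[OF h this] have "complex_of_real (\<tau> ^ (k-1)) * (1 / complex_of_real \<tau>) ^ k \<in> In" .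
    moreover have "complex_of_real (\<tau> ^ (k-1)) * (1 / complex_of_real \<tau>) ^ k = 1 / complex_of_real \<tau>"
    proof -
      obtain j where k: "k = Suc j" using assms by (cases k) auto
      show ?thesis using tau0 by (simp add: k power_divide field_simps)
    qed
    ultimately show False using itau_out by simp
  qed
qed

lemma div_out:
  assumes w: "w \<in> P" and b: "b \<ge> 1"
  shows "w / complex_of_real \<tau> ^ b \<notin> In \<and> w / complex_of_real \<tau> ^ b \<notin> P"
proof (rule ccontr)
  assume "\<not> ?thesis"
  then have h: "w / complex_of_real \<tau> ^ b \<in> In \<or> w / complex_of_real \<tau> ^ b \<in> P" by blast
  have "0 \<le> \<tau> ^ b" "\<tau> ^ b < 1" using tau0 tau1 b by (auto simp: power_less_one_iff)
  from scale_InP[OF h this] have "complex_of_real (\<tau> ^ b) * (w / complex_of_real \<tau> ^ b) \<in> In" .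
  then have "w \<in> In" using tau0 by simp
  then show False using w In_P_disj by blast
qed

lemma mul_in:
  assumes w: "w \<in> P" and a: "a \<ge> 1"
  shows "complex_of_real \<tau> ^ a * w \<in> In"
proof -
  have "0 \<le> \<tau> ^ a" "\<tau> ^ a < 1" using tau0 tau1 a by (auto simp: power_less_one_iff)
  then show ?thesis using scale_InP[of w "\<tau>^a"] w by simp
qed

lemma cauchy_in:
  assumes E: "finite E" "\<And>e. e \<in> E \<Longrightarrow> e \<notin> In \<and> e \<notin> P"
    and g: "g holomorphic_on (UNIV - E)" and z: "z \<in> In"
  shows "((\<lambda>w. g w / (w - z)) has_contour_integral (2 * pi * \<i> * g z)) \<Gamma>"
proof -
  have "((\<lambda>w. g w / (w - z)) has_contour_integral (2 * pi * \<i> * winding_number \<Gamma> z * g z)) \<Gamma>"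
  proof (rule Cauchy_integral_formula_global[OF _ g _ vp _ loop])
    show "open (UNIV - E)" using E(1) by (simp add: open_Diff finite_imp_closed)
    show "z \<in> UNIV - E" using E(2) z by blast
    show "P \<subseteq> UNIV - E - {z}" using E(2) z In_P_disj by blast
    show "\<And>w. w \<notin> UNIV - E \<Longrightarrow> winding_number \<Gamma> w = 0" using E(2) wn_out by blast
  qed
  then show ?thesis using wn_in[OF z] by simp
qed

end


definition Phi :: "real \<Rightarrow> int \<Rightarrow> real \<Rightarrow> nat \<Rightarrow> complex \<Rightarrow> complex" where
  "Phi \<tau> x t m \<eta> = (\<Prod>k\<in>{1..m}. phi \<tau> x t (complex_of_real \<tau> ^ k * \<eta>))"

definition Km :: "real \<Rightarrow> int \<Rightarrow> real \<Rightarrow> nat \<Rightarrow> complex \<Rightarrow> complex \<Rightarrow> complex" where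
  "Km \<tau> x t m \<eta> \<eta>' = Phi \<tau> x t m \<eta> / (\<eta>' - complex_of_real \<tau> ^ m * \<eta>)"

lemma K1_Km: "K1 \<tau> x t = Km \<tau> x t 1"
  by (simp add: fun_eq_iff K1_def Km_def Phi_def)

lemma phi0: "\<tau> \<noteq> 0 \<Longrightarrow> phi \<tau> x t 0 = complex_of_real \<tau>"
  by (simp add: phi_def)

lemma Phi0: "\<tau> \<noteq> 0 \<Longrightarrow> Phi \<tau> x t m 0 = complex_of_real \<tau> ^ m"
  by (simp add: Phi_def phi0)

lemma Phi_add: "Phi \<tau> x t b u * Phi \<tau> x t a (complex_of_real \<tau> ^ b * u) = Phi \<tau> x t (b + a) u"
proof (induction a)
  case 0
  then show ?case by (simp add: Phi_def)
next
  case (Suc a)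
  have "Phi \<tau> x t (Suc a) (complex_of_real \<tau> ^ b * u) =
        Phi \<tau> x t a (complex_of_real \<tau> ^ b * u) * phi \<tau> x t (complex_of_real \<tau> ^ (b + Suc a) * u)"
    by (simp add: Phi_def power_add mult_ac)
  moreover have "Phi \<tau> x t (b + Suc a) u = Phi \<tau> x t (b + a) u * phi \<tau> x t (complex_of_real \<tau> ^ (b + Suc a) * u)"
    by (simp add: Phi_def)
  ultimately show ?case using Suc by (simp add: mult_ac)
qed

lemma phi_holo:
  assumes "\<tau> \<noteq> 0"
  shows "phi \<tau> x t holomorphic_on (UNIV - {1, 1 / complex_of_real \<tau>})"
proof -
  have a: "1 - complex_of_real \<tau> * z \<noteq> 0" if "z \<noteq> 1 / complex_of_real \<tau>" for z
    using that assms by (auto simp: field_simps)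
  have b: "1 / complex_of_real \<tau> - z \<noteq> 0" if "z \<noteq> 1 / complex_of_real \<tau>" for z
    using that by auto
  show ?thesis unfolding phi_def
    by (intro holomorphic_intros) (use a b in \<open>auto simp: divide_eq_0_iff\<close>)
qed

lemma Phi_holo:
  assumes "\<tau> \<noteq> 0"
  shows "Phi \<tau> x t m holomorphic_on (UNIV - (\<lambda>k. (1 / complex_of_real \<tau>) ^ k) ` {1..m+1})"
  unfolding Phi_def
proof (rule holomorphic_on_prod)
  fix k assume k: "k \<in> {1..m}"
  let ?S = "UNIV - (\<lambda>k. (1 / complex_of_real \<tau>) ^ k) ` {1..m+1}"
  have "(phi \<tau> x t \<circ> (\<lambda>\<eta>. complex_of_real \<tau> ^ k * \<eta>)) holomorphic_on ?S"
  proof (rule holomorphic_on_compose_gen[OF _ phi_holo[OF assms]])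
    show "(\<lambda>\<eta>. complex_of_real \<tau> ^ k * \<eta>) holomorphic_on ?S" by (intro holomorphic_intros)
    show "(\<lambda>\<eta>. complex_of_real \<tau> ^ k * \<eta>) ` ?S \<subseteq> UNIV - {1, 1 / complex_of_real \<tau>}"
    proof (rule image_subsetI)
      fix \<eta> assume h0: "\<eta> \<in> ?S"
      then have h: "\<eta> \<notin> (\<lambda>k. (1 / complex_of_real \<tau>) ^ k) ` {1..m+1}" by blast
      show "complex_of_real \<tau> ^ k * \<eta> \<in> UNIV - {1, 1 / complex_of_real \<tau>}"
      proof (rule ccontr)
        assume "\<not> ?thesis"
        then have h2: "complex_of_real \<tau> ^ k * \<eta> = 1 \<or> complex_of_real \<tau> ^ k * \<eta> = 1 / complex_of_real \<tau>" by blast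
      show False
      proof (cases "complex_of_real \<tau> ^ k * \<eta> = 1")
        case True
        then have "\<eta> = (1 / complex_of_real \<tau>) ^ k" using assms by (simp add: power_divide field_simps)
        then show False using h k by auto
      next
        case False
        then have "complex_of_real \<tau> ^ k * \<eta> = 1 / complex_of_real \<tau>" using h2 by auto
        then have "\<eta> = (1 / complex_of_real \<tau>) ^ (k+1)" using assms by (simp add: power_divide field_simps)
        moreover have "k + 1 \<in> {1..m+1}" using k by auto
        ultimately show False using h by blast
      qed
      qed
    qed
  qed
  then show "(\<lambda>\<eta>. phi \<tau> x t (complex_of_real \<tau> ^ k * \<eta>)) holomorphic_on ?S" by (simp add: o_def)
qed

context geo
begin

lemma pows_out: "e \<in> (\<lambda>k. (1 / complex_of_real \<tau>) ^ k) ` {1..m+1} \<Longrightarrow> e \<notin> In \<and> e \<notin> P"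
  using pow_out by auto

lemma diag:
  assumes a: "a \<ge> 1"
  shows "((\<lambda>z. Km \<tau> x t a z z) has_contour_integral
           (2 * pi * \<i> * complex_of_real (\<tau> ^ a / (1 - \<tau> ^ a)))) \<Gamma>"
proof -
  have ta: "\<tau> ^ a < 1" using tau0 tau1 a by (simp add: power_less_one_iff)
  have ne: "1 - complex_of_real \<tau> ^ a \<noteq> 0"
  proof
    assume "1 - complex_of_real \<tau> ^ a = 0"
    then have "complex_of_real (\<tau> ^ a) = 1" by simp
    then have "\<tau> ^ a = 1" using of_real_eq_1_iff by blast
    then show False using ta by simp
  qed
  define g where "g z = Phi \<tau> x t a z / (1 - complex_of_real \<tau> ^ a)" for z
  have hol: "g holomorphic_on (UNIV - (\<lambda>k. (1 / complex_of_real \<tau>) ^ k) ` {1..a+1})"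
    unfolding g_def using Phi_holo[of \<tau> x t a] tau0 by (intro holomorphic_intros) auto
  have "((\<lambda>w. g w / (w - 0)) has_contour_integral (2 * pi * \<i> * g 0)) \<Gamma>"
    by (rule cauchy_in[OF _ pows_out hol zero_In]) auto
  moreover have "(\<lambda>w. g w / (w - 0)) = (\<lambda>z. Km \<tau> x t a z z)"
    by (auto simp: fun_eq_iff g_def Km_def field_simps algebra_simps)
  moreover have "g 0 = complex_of_real (\<tau> ^ a / (1 - \<tau> ^ a))"
    using tau0 by (simp add: g_def Phi0)
  ultimately show ?thesis by simp
qed

lemma merge:
  assumes a: "a \<ge> 1" and b: "b \<ge> 1" and u: "u \<in> P" and w: "w \<in> P"
  shows "((\<lambda>z. Km \<tau> x t a z w * Km \<tau> x t b u z) has_contour_integral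
           (2 * pi * \<i> * Km \<tau> x t (b + a) u w)) \<Gamma>"
proof -
  define E where "E = insert (w / complex_of_real \<tau> ^ a) ((\<lambda>k. (1 / complex_of_real \<tau>) ^ k) ` {1..a+1})"
  have E: "finite E" "\<And>e. e \<in> E \<Longrightarrow> e \<notin> In \<and> e \<notin> P"
    unfolding E_def using pows_out div_out[OF w a] by auto
  define g where "g z = Phi \<tau> x t a z * Phi \<tau> x t b u / (w - complex_of_real \<tau> ^ a * z)" for z
  have dn: "w - complex_of_real \<tau> ^ a * z \<noteq> 0" if "z \<noteq> w / complex_of_real \<tau> ^ a" for z
    using that tau0 by (auto simp: field_simps)
  have hol: "g holomorphic_on (UNIV - E)"
    unfolding g_def
    apply (intro holomorphic_intros)
      apply (rule holomorphic_on_subset[OF Phi_holo[of \<tau> x t a]])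
    using tau0 dn by (auto simp: E_def)
  have zin: "complex_of_real \<tau> ^ b * u \<in> In" by (rule mul_in[OF u b])
  have "((\<lambda>z. g z / (z - complex_of_real \<tau> ^ b * u)) has_contour_integral
          (2 * pi * \<i> * g (complex_of_real \<tau> ^ b * u))) \<Gamma>"
    by (rule cauchy_in[OF E hol zin])
  moreover have "(\<lambda>z. g z / (z - complex_of_real \<tau> ^ b * u)) = (\<lambda>z. Km \<tau> x t a z w * Km \<tau> x t b u z)"
    by (auto simp: fun_eq_iff g_def Km_def)
  moreover have "g (complex_of_real \<tau> ^ b * u) = Km \<tau> x t (b + a) u w"
    unfolding g_def Km_def by (simp add: Phi_add[symmetric] power_add mult_ac)
  ultimately show ?thesis by simp
qed

end


definition lift :: "(nat \<Rightarrow> nat) \<Rightarrow> nat \<Rightarrow> nat" where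
  "lift q i = (case i of 0 \<Rightarrow> 0 | Suc j \<Rightarrow> Suc (q j))"

definition Tb :: "nat \<Rightarrow> (nat \<Rightarrow> nat) \<Rightarrow> nat \<Rightarrow> nat" where
  "Tb b q = lift q \<circ> Transposition.transpose 0 (Suc b)"

abbreviation "Perm n \<equiv> {p. p permutes {..<n}}"

lemma lift_0 [simp]: "lift q 0 = 0" and lift_Suc [simp]: "lift q (Suc j) = Suc (q j)"
  by (auto simp: lift_def)

lemma lift_permutes:
  assumes q: "q permutes {..<n}"
  shows "lift q permutes {..<Suc n}"
proof -
  have out: "\<And>j. j \<notin> {..<n} \<Longrightarrow> q j = j" by (rule permutes_not_in[OF q])
  have ex0: "\<forall>y. \<exists>!x. q x = y" using q[unfolded permutes_def] by (rule conjunct2)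
  have ex: "\<And>j. \<exists>!x. q x = j" using ex0 by (rule spec)
  show ?thesis unfolding permutes_def
  proof (intro conjI allI impI)
    fix i assume i: "i \<notin> {..<Suc n}"
    show "lift q i = i"
    proof (cases i)
      case 0 then show ?thesis by simp
    next
      case (Suc j) then show ?thesis using out[of j] i by simp
    qed
  next
    fix y
    show "\<exists>!x. lift q x = y"
    proof (cases y)
      case 0
      show ?thesis
      proof (rule ex1I[of _ 0])
        show "lift q 0 = y" using 0 by simp
        fix x' assume "lift q x' = y"
        then show "x' = 0" using 0 by (cases x') auto
      qed
    next
      case (Suc j)
      obtain x where x: "q x = j" using ex[of j] by blast
      have u: "\<And>x'. q x' = j \<Longrightarrow> x' = x" using ex[of j] x by blast
      show ?thesis
      proof (rule ex1I[of _ "Suc x"])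
        show "lift q (Suc x) = y" using x Suc by simp
        fix x' assume h: "lift q x' = y"
        show "x' = Suc x"
        proof (cases x')
          case 0 then show ?thesis using h Suc by simp
        next
          case (Suc x'') then show ?thesis using h \<open>y = Suc j\<close> u by simp
        qed
      qed
    qed
  qed
qed

lemma lift_id: "lift id = id"
  by (auto simp: fun_eq_iff lift_def split: nat.split)

lemma transpose_Suc: "Transposition.transpose (Suc a) (Suc b) (Suc k) = Suc (Transposition.transpose a b k)"
  by (simp add: Transposition.transpose_def)

lemma transpose_Suc0: "Transposition.transpose (Suc a) (Suc b) 0 = 0"
  by (simp add: Transposition.transpose_def)

lemma lift_transp: "lift (Transposition.transpose a b \<circ> p) = Transposition.transpose (Suc a) (Suc b) \<circ> lift p"
proof
  fix i show "lift (Transposition.transpose a b \<circ> p) i = (Transposition.transpose (Suc a) (Suc b) \<circ> lift p) i"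
    by (cases i) (simp_all only: lift_0 lift_Suc o_apply transpose_Suc transpose_Suc0)
qed

lemma sign_lift:
  assumes q: "q permutes {..<n}"
  shows "sign (lift q) = sign q"
  using q finite_lessThan
proof (induction rule: permutes_induct)
  case id
  then show ?case by (simp add: lift_id[unfolded id_def] sign_id[unfolded id_def])
next
  case (swap a b p)
  have pp: "permutation p" by (rule permutes_imp_permutation[OF finite_lessThan \<open>p permutes {..<n}\<close>])
  have pl: "permutation (lift p)" by (rule permutes_imp_permutation[OF finite_lessThan lift_permutes[OF \<open>p permutes {..<n}\<close>]])
  have s1: "sign (Transposition.transpose (Suc a) (Suc b)) = (-1::int)"
    using \<open>a \<noteq> b\<close> by (simp only: sign_swap_id) simp
  have s2: "sign (Transposition.transpose a b) = (-1::int)"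
    using \<open>a \<noteq> b\<close> by (simp only: sign_swap_id) simp
  have "sign (lift (Transposition.transpose a b \<circ> p)) = sign (Transposition.transpose (Suc a) (Suc b)) * sign (lift p)"
    unfolding lift_transp by (rule sign_compose[OF permutation_swap_id pl])
  also have "\<dots> = sign (Transposition.transpose a b) * sign p"
    using s1 s2 \<open>sign (lift p) = sign p\<close> by simp
  also have "\<dots> = sign (Transposition.transpose a b \<circ> p)"
    by (rule sign_compose[OF permutation_swap_id pp, symmetric])
  finally show ?case .
qed

lemma Tb_permutes:
  assumes q: "q permutes {..<n}" and b: "b < n"
  shows "Tb b q permutes {..<Suc n}"
  unfolding Tb_def
  by (rule permutes_compose[OF permutes_swap_id lift_permutes[OF q]]) (use b in auto)

lemma sign_Tb:
  assumes q: "q permutes {..<n}" and b: "b < n"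
  shows "sign (Tb b q) = - sign q"
proof -
  have pl: "permutation (lift q)" by (rule permutes_imp_permutation[OF finite_lessThan lift_permutes[OF q]])
  show ?thesis unfolding Tb_def
    by (simp add: sign_compose[OF pl permutation_swap_id] sign_swap_id sign_lift[OF q])
qed

lemma Tb_0 [simp]: "Tb b q 0 = Suc (q b)"
  by (simp add: Tb_def)

lemma Tb_Suc: "Tb b q (Suc j) = (if j = b then 0 else Suc (q j))"
  by (simp add: Tb_def Transposition.transpose_def)

lemma Perm_Suc_decomp:
  "Perm (Suc n) = lift ` Perm n \<union> (\<Union>b<n. Tb b ` Perm n)"
proof -
  have fin: "finite (Perm m)" for m :: nat by (rule finite_permutations[OF finite_lessThan])
  have cardP: "card (Perm m) = fact m" for m :: nat by (rule card_permutations) auto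
  have injl: "inj_on lift (Perm n)"
  proof (rule inj_onI)
    fix q1 q2 assume "lift q1 = lift q2"
    then have "\<And>j. lift q1 (Suc j) = lift q2 (Suc j)" by simp
    then show "q1 = q2" by (auto simp: fun_eq_iff)
  qed
  have injT: "inj_on (Tb b) (Perm n)" for b
  proof (rule inj_onI)
    fix q1 q2 assume h: "Tb b q1 = Tb b q2"
    show "q1 = q2"
    proof
      fix j
      show "q1 j = q2 j"
      proof (cases "j = b")
        case True
        then show ?thesis using fun_cong[OF h, of 0] by simp
      next
        case False
        then show ?thesis using fun_cong[OF h, of "Suc j"] by (simp add: Tb_Suc)
      qed
    qed
  qed
  let ?U = "lift ` Perm n \<union> (\<Union>b<n. Tb b ` Perm n)"
  have sub: "?U \<subseteq> Perm (Suc n)"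
    using lift_permutes Tb_permutes by blast
  have d1: "lift ` Perm n \<inter> (\<Union>b<n. Tb b ` Perm n) = {}"
  proof -
    { fix q q' b assume "lift q = Tb b q'"
      then have "lift q 0 = Tb b q' 0" by simp
      then have False by simp }
    then show ?thesis by blast
  qed
  have d2: "Tb b ` Perm n \<inter> Tb b' ` Perm n = {}" if "b \<noteq> b'" for b b'
  proof -
    { fix q q' assume "Tb b q = Tb b' q'"
      then have "Tb b q (Suc b) = Tb b' q' (Suc b)" by simp
      then have False using that by (simp add: Tb_Suc) }
    then show ?thesis by blast
  qed
  have "card ?U = card (lift ` Perm n) + card (\<Union>b<n. Tb b ` Perm n)"
    by (rule card_Un_disjoint) (use fin d1 in auto)
  also have "card (lift ` Perm n) = fact n" using card_image[OF injl] cardP by simp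
  also have "card (\<Union>b<n. Tb b ` Perm n) = (\<Sum>b<n. card (Tb b ` Perm n))"
    by (rule card_UN_disjoint) (use fin d2 in auto)
  also have "\<dots> = (\<Sum>b<n. fact n)" using card_image[OF injT] cardP by simp
  finally have "card ?U = fact (Suc n)" by (simp add: algebra_simps)
  then have "card ?U = card (Perm (Suc n))" using cardP by simp
  then show ?thesis using card_subset_eq[OF fin sub] by simp
qed

lemma sum_Perm_Suc:
  "(\<Sum>p\<in>Perm (Suc n). f p) = (\<Sum>q\<in>Perm n. f (lift q)) + (\<Sum>b<n. \<Sum>q\<in>Perm n. f (Tb b q))"
proof -
  have fin: "finite (Perm m)" for m :: nat by (rule finite_permutations[OF finite_lessThan])
  have injl: "inj_on lift (Perm n)"
  proof (rule inj_onI)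
    fix q1 q2 assume "lift q1 = lift q2"
    then have "\<And>j. lift q1 (Suc j) = lift q2 (Suc j)" by simp
    then show "q1 = q2" by (auto simp: fun_eq_iff)
  qed
  have injT: "inj_on (Tb b) (Perm n)" for b
  proof (rule inj_onI)
    fix q1 q2 assume h: "Tb b q1 = Tb b q2"
    show "q1 = q2"
    proof
      fix j
      show "q1 j = q2 j"
      proof (cases "j = b")
        case True
        then show ?thesis using fun_cong[OF h, of 0] by simp
      next
        case False
        then show ?thesis using fun_cong[OF h, of "Suc j"] by (simp add: Tb_Suc)
      qed
    qed
  qed
  have d1: "lift ` Perm n \<inter> (\<Union>b<n. Tb b ` Perm n) = {}"
  proof -
    { fix q q' b assume "lift q = Tb b q'"
      then have "lift q 0 = Tb b q' 0" by simp
      then have False by simp }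
    then show ?thesis by blast
  qed
  have d2: "Tb b ` Perm n \<inter> Tb b' ` Perm n = {}" if "b \<noteq> b'" for b b'
  proof -
    { fix q q' assume "Tb b q = Tb b' q'"
      then have "Tb b q (Suc b) = Tb b' q' (Suc b)" by simp
      then have False using that by (simp add: Tb_Suc) }
    then show ?thesis by blast
  qed
  have "(\<Sum>p\<in>Perm (Suc n). f p) = (\<Sum>p\<in>lift ` Perm n. f p) + (\<Sum>p\<in>(\<Union>b<n. Tb b ` Perm n). f p)"
    unfolding Perm_Suc_decomp by (rule sum.union_disjoint) (use fin d1 in auto)
  also have "(\<Sum>p\<in>(\<Union>b<n. Tb b ` Perm n). f p) = (\<Sum>b<n. \<Sum>p\<in>Tb b ` Perm n. f p)"
    by (rule sum.UNION_disjoint) (use fin d2 in auto)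
  also have "\<dots> = (\<Sum>b<n. \<Sum>q\<in>Perm n. f (Tb b q))"
    by (rule sum.cong[OF refl]) (simp add: sum.reindex[OF injT])
  also have "(\<Sum>p\<in>lift ` Perm n. f p) = (\<Sum>q\<in>Perm n. f (lift q))"
    by (simp add: sum.reindex[OF injl])
  finally show ?thesis .
qed



definition DETg :: "(nat \<Rightarrow> complex \<Rightarrow> complex \<Rightarrow> complex) \<Rightarrow> nat \<Rightarrow> (nat \<Rightarrow> nat) \<Rightarrow> (nat \<Rightarrow> complex) \<Rightarrow> complex" where
  "DETg K n m v = (\<Sum>p\<in>Perm n. of_int (sign p) * (\<Prod>i<n. K (m i) (v i) (v (p i))))"

lemma kernel_det_DET: "kernel_det (K1 \<tau> x t) n v = DETg (Km \<tau> x t) n (\<lambda>_. 1) v"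
  by (simp add: kernel_det_def DETg_def K1_Km)

lemma DETg_0: "DETg K 0 m v = 1"
  by (simp add: DETg_def)

definition tR :: "real \<Rightarrow> nat \<Rightarrow> real" where
  "tR \<tau> k = \<tau> ^ k / (1 - \<tau> ^ k)"

primrec JR :: "real \<Rightarrow> nat \<Rightarrow> (nat \<Rightarrow> nat) \<Rightarrow> real" where
  "JR \<tau> 0 m = 1"
| "JR \<tau> (Suc n) m = tR \<tau> (m 0) * JR \<tau> n (m \<circ> Suc)
     - (\<Sum>b<n. JR \<tau> n ((m \<circ> Suc)(b := m (Suc b) + m 0)))"

lemma shift_0 [simp]: "shift w z 0 = z" and shift_Suc [simp]: "shift w z (Suc j) = w j"
  by (simp_all add: shift_def)

lemma DETg_Suc_shift:
  "DETg K (Suc n) m (shift w z) = K (m 0) z z * DETg K n (m \<circ> Suc) w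
   - (\<Sum>b<n. \<Sum>q\<in>Perm n. of_int (sign q) * (K (m 0) z (w (q b)) * K (m (Suc b)) (w b) z *
        (\<Prod>j\<in>{..<n}-{b}. K (m (Suc j)) (w j) (w (q j)))))"
proof -
  define f where "f p = of_int (sign p) * (\<Prod>i<Suc n. K (m i) (shift w z i) (shift w z (p i)))" for p
  have "DETg K (Suc n) m (shift w z) = (\<Sum>p\<in>Perm (Suc n). f p)"
    by (simp add: DETg_def f_def)
  also have "\<dots> = (\<Sum>q\<in>Perm n. f (lift q)) + (\<Sum>b<n. \<Sum>q\<in>Perm n. f (Tb b q))"
    by (rule sum_Perm_Suc)
  also have "(\<Sum>q\<in>Perm n. f (lift q)) = K (m 0) z z * DETg K n (m \<circ> Suc) w"
    unfolding DETg_def sum_distrib_left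
  proof (rule sum.cong[OF refl])
    fix q assume q: "q \<in> Perm n"
    show "f (lift q) = K (m 0) z z * (of_int (sign q) * (\<Prod>i<n. K ((m \<circ> Suc) i) (w i) (w (q i))))"
      unfolding f_def prod.lessThan_Suc_shift using sign_lift[of q n] q by simp
  qed
  also have "(\<Sum>b<n. \<Sum>q\<in>Perm n. f (Tb b q)) = - (\<Sum>b<n. \<Sum>q\<in>Perm n. of_int (sign q) * (K (m 0) z (w (q b)) * K (m (Suc b)) (w b) z *
        (\<Prod>j\<in>{..<n}-{b}. K (m (Suc j)) (w j) (w (q j)))))"
    unfolding sum_negf[symmetric]
  proof (intro sum.cong refl)
    fix b q assume b: "b \<in> {..<n}" and q: "q \<in> Perm n"
    have "(\<Prod>j<n. K (m (Suc j)) (shift w z (Suc j)) (shift w z (Tb b q (Suc j)))) =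
          (\<Prod>j<n. (if j = b then K (m (Suc b)) (w b) z else K (m (Suc j)) (w j) (w (q j))))"
      by (rule prod.cong) (auto simp: Tb_Suc)
    also have "\<dots> = K (m (Suc b)) (w b) z * (\<Prod>j\<in>{..<n}-{b}. K (m (Suc j)) (w j) (w (q j)))"
      apply (subst prod.remove[OF finite_lessThan b])
      apply (rule arg_cong2[where f=times])
       apply simp
      apply (rule prod.cong)
       apply auto
      done
    finally have pr: "(\<Prod>j<n. K (m (Suc j)) (shift w z (Suc j)) (shift w z (Tb b q (Suc j)))) =
        K (m (Suc b)) (w b) z * (\<Prod>j\<in>{..<n}-{b}. K (m (Suc j)) (w j) (w (q j)))" .
    have sg: "sign (Tb b q) = - sign q" using sign_Tb[of q n b] q b by simp
    show "f (Tb b q) = - (of_int (sign q) * (K (m 0) z (w (q b)) * K (m (Suc b)) (w b) z *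
        (\<Prod>j\<in>{..<n}-{b}. K (m (Suc j)) (w j) (w (q j)))))"
      unfolding f_def prod.lessThan_Suc_shift using pr sg by (simp add: mult_ac)
  qed
  finally show ?thesis by (simp add: comp_def)
qed

context geo
begin

lemma DET_integral:
  assumes w: "box P n w" and m: "\<And>i. m i \<ge> 1"
  shows "((\<lambda>z. DETg (Km \<tau> x t) (Suc n) m (shift w z)) has_contour_integral
     (2 * pi * \<i> * (complex_of_real (tR \<tau> (m 0)) * DETg (Km \<tau> x t) n (m \<circ> Suc) w +
        (-1) * (\<Sum>b<n. DETg (Km \<tau> x t) n ((m \<circ> Suc)(b := m (Suc b) + m 0)) w)))) \<Gamma>"
proof -
  let ?K = "Km \<tau> x t"
  have wP: "\<And>i. i < n \<Longrightarrow> w i \<in> P" using w by (simp add: box_def)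
  have qP: "w (q b) \<in> P" if "q \<in> Perm n" "b < n" for q b
  proof -
    have "q b \<in> {..<n}" using that permutes_in_image[of q "{..<n}" b] by auto
    then show ?thesis using wP by simp
  qed
  have I1: "((\<lambda>z. ?K (m 0) z z * DETg ?K n (m \<circ> Suc) w) has_contour_integral
            (2 * pi * \<i> * complex_of_real (tR \<tau> (m 0)) * DETg ?K n (m \<circ> Suc) w)) \<Gamma>"
    by (rule has_contour_integral_rmul) (use diag[of "m 0" x t] m in \<open>simp add: tR_def\<close>)
  have I2: "((\<lambda>z. \<Sum>b<n. \<Sum>q\<in>Perm n. of_int (sign q) * (?K (m 0) z (w (q b)) * ?K (m (Suc b)) (w b) z *
        (\<Prod>j\<in>{..<n}-{b}. ?K (m (Suc j)) (w j) (w (q j))))) has_contour_integral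
        (\<Sum>b<n. \<Sum>q\<in>Perm n. of_int (sign q) * (2 * pi * \<i> * ?K (m (Suc b) + m 0) (w b) (w (q b)) *
        (\<Prod>j\<in>{..<n}-{b}. ?K (m (Suc j)) (w j) (w (q j)))))) \<Gamma>"
  proof (intro has_contour_integral_sum finite_lessThan finite_permutations has_contour_integral_lmul has_contour_integral_rmul)
    fix b q assume b: "b \<in> {..<n}" and q: "q \<in> Perm n"
    show "((\<lambda>z. ?K (m 0) z (w (q b)) * ?K (m (Suc b)) (w b) z) has_contour_integral
            (2 * pi * \<i> * ?K (m (Suc b) + m 0) (w b) (w (q b)))) \<Gamma>"
      by (rule merge) (use m wP qP b q in auto)
  qed
  have eq: "(\<Sum>b<n. \<Sum>q\<in>Perm n. of_int (sign q) * (2 * pi * \<i> * ?K (m (Suc b) + m 0) (w b) (w (q b)) *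
        (\<Prod>j\<in>{..<n}-{b}. ?K (m (Suc j)) (w j) (w (q j))))) =
        2 * pi * \<i> * (\<Sum>b<n. DETg ?K n ((m \<circ> Suc)(b := m (Suc b) + m 0)) w)"
    unfolding DETg_def sum_distrib_left
  proof (intro sum.cong refl)
    fix b q assume b: "b \<in> {..<n}" and q: "q \<in> Perm n"
    have "(\<Prod>i<n. ?K (((m \<circ> Suc)(b := m (Suc b) + m 0)) i) (w i) (w (q i))) =
          ?K (m (Suc b) + m 0) (w b) (w (q b)) * (\<Prod>j\<in>{..<n}-{b}. ?K (m (Suc j)) (w j) (w (q j)))"
      apply (subst prod.remove[OF finite_lessThan b])
      apply (rule arg_cong2[where f=times])
       apply simp
      apply (rule prod.cong)
       apply auto
      done
    then show "of_int (sign q) * (2 * pi * \<i> * ?K (m (Suc b) + m 0) (w b) (w (q b)) *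
        (\<Prod>j\<in>{..<n}-{b}. ?K (m (Suc j)) (w j) (w (q j)))) =
        2 * pi * \<i> * (of_int (sign q) * (\<Prod>i<n. ?K (((m \<circ> Suc)(b := m (Suc b) + m 0)) i) (w i) (w (q i))))"
      by (simp add: mult_ac)
  qed
  from has_contour_integral_diff[OF I1 I2] show ?thesis
    unfolding DETg_Suc_shift eq by (simp add: algebra_simps)
qed

lemma MI_DET:
  assumes "\<And>i. m i \<ge> 1"
  shows "MI \<Gamma> n (DETg (Km \<tau> x t) n m) (complex_of_real (JR \<tau> n m))"
  using assms
proof (induction n arbitrary: m)
  case 0
  then show ?case by (simp add: DETg_0)
next
  case (Suc n)
  let ?K = "Km \<tau> x t"
  have m0: "1 \<le> m 0" using Suc.prems by simp
  have pos: "1 \<le> ((m \<circ> Suc)(b := m (Suc b) + m 0)) i" for b i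
  proof (cases "i = b")
    case True then show ?thesis using m0 by simp
  next
    case False then show ?thesis using Suc.prems[of "Suc i"] by simp
  qed
  let ?G = "\<lambda>w. complex_of_real (tR \<tau> (m 0)) * DETg ?K n (m \<circ> Suc) w +
        (-1) * (\<Sum>b<n. DETg ?K n ((m \<circ> Suc)(b := m (Suc b) + m 0)) w)"
  have mi1: "MI \<Gamma> n (DETg ?K n (m \<circ> Suc)) (complex_of_real (JR \<tau> n (m \<circ> Suc)))"
    by (rule Suc.IH) (use Suc.prems in auto)
  have mi2: "MI \<Gamma> n (\<lambda>w. \<Sum>b<n. DETg ?K n ((m \<circ> Suc)(b := m (Suc b) + m 0)) w)
               (\<Sum>b<n. complex_of_real (JR \<tau> n ((m \<circ> Suc)(b := m (Suc b) + m 0))))"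
    by (rule MI_sum[OF finite_lessThan], rule Suc.IH) (rule pos)
  have "MI \<Gamma> n ?G (complex_of_real (tR \<tau> (m 0)) * complex_of_real (JR \<tau> n (m \<circ> Suc)) +
        (-1) * (\<Sum>b<n. complex_of_real (JR \<tau> n ((m \<circ> Suc)(b := m (Suc b) + m 0)))))"
    by (rule MI_lin2[OF mi1 mi2])
  moreover have "complex_of_real (tR \<tau> (m 0)) * complex_of_real (JR \<tau> n (m \<circ> Suc)) +
        (-1) * (\<Sum>b<n. complex_of_real (JR \<tau> n ((m \<circ> Suc)(b := m (Suc b) + m 0)))) =
        complex_of_real (JR \<tau> (Suc n) m)"
    by simp
  ultimately have mi: "MI \<Gamma> n ?G (complex_of_real (JR \<tau> (Suc n) m))" by simp
  show ?case
    unfolding MI.simps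
    by (rule exI[of _ ?G], intro conjI allI impI DET_integral mi) (use Suc.prems in auto)
qed

end


definition Ls :: "nat \<Rightarrow> nat set \<Rightarrow> nat list set" where
  "Ls n A = {xs. distinct xs \<and> length xs = n \<and> set xs \<subseteq> A}"

definition JL :: "real \<Rightarrow> nat set \<Rightarrow> nat \<Rightarrow> (nat \<Rightarrow> nat) \<Rightarrow> real" where
  "JL \<tau> A n m = (\<Sum>xs\<in>Ls n A. \<Prod>i<n. (\<tau> ^ (xs ! i)) ^ (m i))"

definition tA :: "real \<Rightarrow> nat set \<Rightarrow> nat \<Rightarrow> real" where
  "tA \<tau> A k = (\<Sum>a\<in>A. (\<tau> ^ a) ^ k)"

lemma finite_Ls: "finite A \<Longrightarrow> finite (Ls n A)"
  by (rule finite_subset[OF _ finite_lists_length_eq[of A n]]) (auto simp: Ls_def)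

lemma set_nth_image: "length xs = n \<Longrightarrow> set xs = (nth xs) ` {..<n}"
  by (auto simp: set_conv_nth)

lemma sum_set_nth:
  assumes "distinct xs" "length xs = n"
  shows "(\<Sum>a\<in>set xs. f a) = (\<Sum>i<n. f (xs ! i))"
proof -
  have "inj_on (nth xs) {..<n}" by (rule inj_on_nth) (use assms in auto)
  then show ?thesis using set_nth_image[OF assms(2)] by (simp add: sum.reindex)
qed

lemma prod_set_nth:
  assumes "distinct xs" "length xs = n"
  shows "(\<Prod>a\<in>set xs. f a) = (\<Prod>i<n. f (xs ! i))"
proof -
  have "inj_on (nth xs) {..<n}" by (rule inj_on_nth) (use assms in auto)
  then show ?thesis using set_nth_image[OF assms(2)] by (simp add: prod.reindex)
qed

lemma JL_0: "JL \<tau> A 0 m = 1"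
proof -
  have "Ls 0 A = {[]}" by (auto simp: Ls_def)
  then show ?thesis by (simp add: JL_def)
qed

lemma JL_rec:
  assumes A: "finite A"
  shows "JL \<tau> A (Suc n) m = tA \<tau> A (m 0) * JL \<tau> A n (m \<circ> Suc)
     - (\<Sum>b<n. JL \<tau> A n ((m \<circ> Suc)(b := m (Suc b) + m 0)))"
proof -
  define W where "W xs mm = (\<Prod>i<n. (\<tau> ^ (xs ! i)) ^ (mm i))" for xs mm
  define g where "g a xs = (\<tau> ^ a) ^ (m 0) * W xs (m \<circ> Suc)" for a xs
  define G where "G ys = (\<Prod>i<Suc n. (\<tau> ^ (ys ! i)) ^ (m i))" for ys
  have fin: "finite (Ls n A)" by (rule finite_Ls[OF A])
  have "tA \<tau> A (m 0) * JL \<tau> A n (m \<circ> Suc) = (\<Sum>xs\<in>Ls n A. \<Sum>a\<in>A. g a xs)"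
    unfolding tA_def JL_def g_def W_def sum_product by (rule sum.swap)
  also have "\<dots> = (\<Sum>xs\<in>Ls n A. \<Sum>a\<in>A - set xs. g a xs) + (\<Sum>xs\<in>Ls n A. \<Sum>a\<in>set xs. g a xs)"
    unfolding sum.distrib[symmetric]
  proof (rule sum.cong[OF refl])
    fix xs assume "xs \<in> Ls n A"
    then have "set xs \<subseteq> A" by (simp add: Ls_def)
    then show "(\<Sum>a\<in>A. g a xs) = (\<Sum>a\<in>A - set xs. g a xs) + (\<Sum>a\<in>set xs. g a xs)"
      using sum.subset_diff[of "set xs" A] A by simp
  qed
  also have "(\<Sum>xs\<in>Ls n A. \<Sum>a\<in>A - set xs. g a xs) = JL \<tau> A (Suc n) m"
  proof -
    have "(\<Sum>xs\<in>Ls n A. \<Sum>a\<in>A - set xs. g a xs) = (\<Sum>(xs, a)\<in>Sigma (Ls n A) (\<lambda>xs. A - set xs). g a xs)"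
      by (rule sum.Sigma) (use fin A in auto)
    also have "\<dots> = (\<Sum>x\<in>Sigma (Ls n A) (\<lambda>xs. A - set xs). G ((\<lambda>(xs, a). a # xs) x))"
      by (rule sum.cong[OF refl]) (auto simp del: prod.lessThan_Suc simp add: G_def g_def W_def prod.lessThan_Suc_shift)
    also have "\<dots> = (\<Sum>ys\<in>Ls (Suc n) A. G ys)"
    proof (rule sum.reindex_bij_betw)
      show "bij_betw (\<lambda>(xs, a). a # xs) (Sigma (Ls n A) (\<lambda>xs. A - set xs)) (Ls (Suc n) A)"
      proof (rule bij_betwI')
        show "\<And>x y. x \<in> Sigma (Ls n A) (\<lambda>xs. A - set xs) \<Longrightarrow> y \<in> Sigma (Ls n A) (\<lambda>xs. A - set xs) \<Longrightarrow>
               ((case x of (xs, a) \<Rightarrow> a # xs) = (case y of (xs, a) \<Rightarrow> a # xs)) = (x = y)"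
          by auto
        show "\<And>x. x \<in> Sigma (Ls n A) (\<lambda>xs. A - set xs) \<Longrightarrow> (case x of (xs, a) \<Rightarrow> a # xs) \<in> Ls (Suc n) A"
          by (auto simp: Ls_def)
        fix ys assume "ys \<in> Ls (Suc n) A"
        then obtain a xs where "ys = a # xs" "xs \<in> Ls n A" "a \<in> A - set xs"
          by (cases ys) (auto simp: Ls_def)
        then show "\<exists>x\<in>Sigma (Ls n A) (\<lambda>xs. A - set xs). ys = (case x of (xs, a) \<Rightarrow> a # xs)"
          by (intro bexI[of _ "(xs, a)"]) auto
      qed
    qed
    finally show ?thesis by (simp add: JL_def G_def)
  qed
  also have "(\<Sum>xs\<in>Ls n A. \<Sum>a\<in>set xs. g a xs) = (\<Sum>b<n. JL \<tau> A n ((m \<circ> Suc)(b := m (Suc b) + m 0)))"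
  proof -
    have "(\<Sum>xs\<in>Ls n A. \<Sum>a\<in>set xs. g a xs) = (\<Sum>xs\<in>Ls n A. \<Sum>b<n. W xs ((m \<circ> Suc)(b := m (Suc b) + m 0)))"
    proof (rule sum.cong[OF refl])
      fix xs assume "xs \<in> Ls n A"
      then have d: "distinct xs" "length xs = n" by (auto simp: Ls_def)
      show "(\<Sum>a\<in>set xs. g a xs) = (\<Sum>b<n. W xs ((m \<circ> Suc)(b := m (Suc b) + m 0)))"
        unfolding sum_set_nth[OF d]
      proof (rule sum.cong[OF refl])
        fix b assume b: "b \<in> {..<n}"
        have "W xs ((m \<circ> Suc)(b := m (Suc b) + m 0)) =
              (\<tau> ^ (xs ! b)) ^ (m (Suc b) + m 0) * (\<Prod>i\<in>{..<n}-{b}. (\<tau> ^ (xs ! i)) ^ (m (Suc i)))"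
          unfolding W_def
          apply (subst prod.remove[OF finite_lessThan b])
          apply (rule arg_cong2[where f=times])
           apply simp
          apply (rule prod.cong)
           apply auto
          done
        moreover have "W xs (m \<circ> Suc) = (\<tau> ^ (xs ! b)) ^ (m (Suc b)) * (\<Prod>i\<in>{..<n}-{b}. (\<tau> ^ (xs ! i)) ^ (m (Suc i)))"
          unfolding W_def by (subst prod.remove[OF finite_lessThan b]) simp
        ultimately show "g (xs ! b) xs = W xs ((m \<circ> Suc)(b := m (Suc b) + m 0))"
          by (simp add: g_def power_add mult_ac)
      qed
    qed
    also have "\<dots> = (\<Sum>b<n. \<Sum>xs\<in>Ls n A. W xs ((m \<circ> Suc)(b := m (Suc b) + m 0)))"
      by (rule sum.swap)
    finally show ?thesis by (simp add: JL_def W_def)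
  qed
  finally show ?thesis by (simp add: comp_def)
qed

lemma tA_lim:
  assumes t: "0 < \<tau>" "\<tau> < 1" and k: "k \<ge> 1"
  shows "(\<lambda>N. tA \<tau> {1..N} k) \<longlonglongrightarrow> tR \<tau> k"
proof -
  define r where "r = \<tau> ^ k"
  have r: "0 < r" "r < 1" using t k by (auto simp: r_def power_less_one_iff)
  have eq: "tA \<tau> {1..N} k = r * (\<Sum>a<N. r ^ a)" for N
  proof -
    have "{1..N} = Suc ` {..<N}" by (simp add: image_Suc_lessThan)
    then have "tA \<tau> {1..N} k = (\<Sum>a<N. (\<tau> ^ Suc a) ^ k)" by (simp add: tA_def sum.reindex)
    also have "\<dots> = (\<Sum>a<N. r * r ^ a)"
    proof (rule sum.cong[OF refl])
      fix a
      have "(\<tau> ^ Suc a) ^ k = (\<tau> ^ k) ^ Suc a" by (metis power_mult mult.commute)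
      then show "(\<tau> ^ Suc a) ^ k = r * r ^ a" by (simp add: r_def)
    qed
    also have "\<dots> = r * (\<Sum>a<N. r ^ a)" by (simp add: sum_distrib_left)
    finally show ?thesis .
  qed
  have "(\<lambda>N. \<Sum>a<N. r ^ a) \<longlonglongrightarrow> 1 / (1 - r)"
    using geometric_sums[of r] r by (simp add: sums_def)
  then have "(\<lambda>N. r * (\<Sum>a<N. r ^ a)) \<longlonglongrightarrow> r * (1 / (1 - r))" by (rule tendsto_mult_left)
  moreover have "r * (1 / (1 - r)) = tR \<tau> k" by (simp add: tR_def r_def)
  moreover have e2: "(\<lambda>N. tA \<tau> {1..N} k) = (\<lambda>N. r * (\<Sum>a<N. r ^ a))" by (rule ext, rule eq)
  ultimately show ?thesis unfolding e2 by simp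
qed

lemma JL_lim:
  assumes t: "0 < \<tau>" "\<tau> < 1" and m: "\<And>i. m i \<ge> 1"
  shows "(\<lambda>N. JL \<tau> {1..N} n m) \<longlonglongrightarrow> JR \<tau> n m"
  using m
proof (induction n arbitrary: m)
  case 0
  then show ?case by (simp add: JL_0)
next
  case (Suc n)
  have m0: "1 \<le> m 0" using Suc.prems by simp
  have pos: "1 \<le> ((m \<circ> Suc)(b := m (Suc b) + m 0)) i" for b i
  proof (cases "i = b")
    case True then show ?thesis using m0 by simp
  next
    case False then show ?thesis using Suc.prems[of "Suc i"] by simp
  qed
  have "(\<lambda>N. tA \<tau> {1..N} (m 0) * JL \<tau> {1..N} n (m \<circ> Suc)
     - (\<Sum>b<n. JL \<tau> {1..N} n ((m \<circ> Suc)(b := m (Suc b) + m 0)))) \<longlonglongrightarrow>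
     tR \<tau> (m 0) * JR \<tau> n (m \<circ> Suc) - (\<Sum>b<n. JR \<tau> n ((m \<circ> Suc)(b := m (Suc b) + m 0)))"
    by (intro tendsto_intros tA_lim t m0 Suc.IH pos) (use Suc.prems in auto)
  then show ?case by (simp add: JL_rec)
qed



definition es :: "real \<Rightarrow> nat set \<Rightarrow> nat \<Rightarrow> real" where
  "es \<tau> A n = (\<Sum>S\<in>{S. S \<subseteq> A \<and> card S = n}. \<Prod>a\<in>S. \<tau> ^ a)"

lemma JL_one:
  assumes A: "finite A"
  shows "JL \<tau> A n (\<lambda>_. 1) = fact n * es \<tau> A n"
proof -
  define T where "T = {S. S \<subseteq> A \<and> card S = n}"
  have finT: "finite T" unfolding T_def by (rule finite_subset[of _ "Pow A"]) (use A in auto)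
  have "JL \<tau> A n (\<lambda>_. 1) = (\<Sum>xs\<in>Ls n A. \<Prod>a\<in>set xs. \<tau> ^ a)"
    unfolding JL_def by (rule sum.cong[OF refl]) (simp add: Ls_def prod_set_nth)
  also have "\<dots> = (\<Sum>S\<in>T. \<Sum>xs\<in>{xs\<in>Ls n A. set xs = S}. \<Prod>a\<in>set xs. \<tau> ^ a)"
    by (rule sum.group[symmetric, OF finite_Ls[OF A] finT]) (auto simp: T_def Ls_def distinct_card)
  also have "\<dots> = (\<Sum>S\<in>T. fact n * (\<Prod>a\<in>S. \<tau> ^ a))"
  proof (rule sum.cong[OF refl])
    fix S assume S: "S \<in> T"
    have fS: "finite S" using S A finite_subset unfolding T_def by blast
    have "{xs\<in>Ls n A. set xs = S} = permutations_of_set S"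
      using S by (auto simp: Ls_def T_def permutations_of_set_def distinct_card)
    then have "(\<Sum>xs\<in>{xs\<in>Ls n A. set xs = S}. \<Prod>a\<in>set xs. \<tau> ^ a) =
               (\<Sum>xs\<in>permutations_of_set S. \<Prod>a\<in>S. \<tau> ^ a)"
      by (auto simp: permutations_of_set_def intro: sum.cong)
    also have "\<dots> = fact n * (\<Prod>a\<in>S. \<tau> ^ a)"
      using S fS by (simp add: T_def)
    finally show "(\<Sum>xs\<in>{xs\<in>Ls n A. set xs = S}. \<Prod>a\<in>set xs. \<tau> ^ a) = fact n * (\<Prod>a\<in>S. \<tau> ^ a)" .
  qed
  finally show ?thesis by (simp add: es_def T_def sum_distrib_left)
qed

lemma es_expand:
  fixes c :: "'a :: real_field"
  assumes A: "finite A" and M: "card A \<le> M"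
  shows "(\<Sum>n\<le>M. c ^ n * of_real (es \<tau> A n)) = (\<Prod>a\<in>A. 1 + c * of_real (\<tau> ^ a))"
proof -
  have "(\<Prod>a\<in>A. 1 + c * of_real (\<tau> ^ a)) = (\<Prod>a\<in>A. c * of_real (\<tau> ^ a) + 1)"
    by (simp add: add.commute)
  also have "\<dots> = (\<Sum>X\<in>Pow A. (\<Prod>a\<in>X. c * of_real (\<tau> ^ a)) * (\<Prod>a\<in>A - X. 1))"
    by (rule prod_add[OF A])
  also have "\<dots> = (\<Sum>X\<in>Pow A. c ^ card X * of_real (\<Prod>a\<in>X. \<tau> ^ a))"
    by (simp add: prod.distrib of_real_prod)
  also have "\<dots> = (\<Sum>n\<le>M. \<Sum>X\<in>{X\<in>Pow A. card X = n}. c ^ card X * of_real (\<Prod>a\<in>X. \<tau> ^ a))"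
  proof (rule sum.group[symmetric])
    show "finite (Pow A)" using A by simp
    show "finite {..M}" by simp
    show "card ` Pow A \<subseteq> {..M}"
    proof
      fix k assume "k \<in> card ` Pow A"
      then obtain X where X: "X \<subseteq> A" "k = card X" by auto
      have "card X \<le> card A" by (rule card_mono[OF A X(1)])
      then show "k \<in> {..M}" using X M by simp
    qed
  qed
  also have "\<dots> = (\<Sum>n\<le>M. c ^ n * of_real (es \<tau> A n))"
  proof (rule sum.cong[OF refl])
    fix n
    have "{X\<in>Pow A. card X = n} = {S. S \<subseteq> A \<and> card S = n}" by auto
    then show "(\<Sum>X\<in>{X\<in>Pow A. card X = n}. c ^ card X * of_real (\<Prod>a\<in>X. \<tau> ^ a)) = c ^ n * of_real (es \<tau> A n)"
      by (simp add: es_def sum_distrib_left of_real_sum)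
  qed
  finally show ?thesis by simp
qed

lemma es_nonneg: "0 < \<tau> \<Longrightarrow> 0 \<le> es \<tau> A n"
  unfolding es_def by (intro sum_nonneg prod_nonneg) auto

lemma es_zero: "finite A \<Longrightarrow> card A < n \<Longrightarrow> es \<tau> A n = 0"
proof -
  assume A: "finite A" and n: "card A < n"
  have e: "{S. S \<subseteq> A \<and> card S = n} = {}"
  proof -
    { fix S assume S: "S \<subseteq> A" "card S = n"
      have "card S \<le> card A" by (rule card_mono[OF A S(1)])
      then have False using S n by simp }
    then show ?thesis by blast
  qed
  show ?thesis unfolding es_def e by simp
qed

lemma es_bound:
  assumes t: "0 < \<tau>" and A: "finite A" and r: "0 \<le> r"
  shows "r ^ n * es \<tau> A n \<le> exp (r * (\<Sum>a\<in>A. \<tau> ^ a))"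
proof -
  define M where "M = max n (card A)"
  have "r ^ n * es \<tau> A n \<le> (\<Sum>k\<le>M. r ^ k * es \<tau> A k)"
    by (rule member_le_sum[where f="\<lambda>k. r ^ k * es \<tau> A k"]) (use r es_nonneg[OF t] in \<open>auto simp: M_def\<close>)
  also have "\<dots> = (\<Sum>k\<le>M. r ^ k * of_real (es \<tau> A k))" by simp
  also have "\<dots> = (\<Prod>a\<in>A. 1 + r * of_real (\<tau> ^ a))"
    by (rule es_expand[OF A]) (simp add: M_def)
  also have "\<dots> \<le> (\<Prod>a\<in>A. exp (r * \<tau> ^ a))"
    by (rule prod_mono) (use r t in auto)
  also have "\<dots> = exp (r * (\<Sum>a\<in>A. \<tau> ^ a))"
    by (simp add: exp_sum[OF A] sum_distrib_left)
  finally show ?thesis .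
qed

lemma sum_pow_bound:
  fixes \<tau> :: real
  assumes t: "0 < \<tau>" "\<tau> < 1"
  shows "(\<Sum>a\<in>{1..N}. \<tau> ^ a) \<le> \<tau> / (1 - \<tau>)"
proof -
  have inc: "incseq (\<lambda>N. tA \<tau> {1..N} 1)"
    unfolding incseq_def tA_def by (intro allI impI sum_mono2) (use t in auto)
  have "tA \<tau> {1..N} 1 \<le> tR \<tau> 1" by (rule incseq_le[OF inc tA_lim[OF t]]) simp
  then show ?thesis by (simp add: tA_def tR_def)
qed



theorem proposition4:
  fixes \<tau> t :: real and x :: int and \<Gamma> :: "real \<Rightarrow> complex" and lam :: complex
  assumes "0 < \<tau>" "\<tau> < 1" "0 \<le> t"
    and "valid_path \<Gamma>" "simple_path \<Gamma>" "pathfinish \<Gamma> = pathstart \<Gamma>"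
    and "1 \<notin> path_image \<Gamma>" "winding_number \<Gamma> 1 = 1"
    and "1 / complex_of_real \<tau> \<notin> path_image \<Gamma>"
    and "winding_number \<Gamma> (1 / complex_of_real \<tau>) = 0"
    and "\<forall>z\<in>path_image \<Gamma>. \<forall>s\<in>{0..<1::real}. complex_of_real s * z \<in> inside (path_image \<Gamma>)"
  shows "summable (fredholm_term \<Gamma> (K1 \<tau> x t) lam) \<and>
         fredholm_det \<Gamma> (K1 \<tau> x t) lam = (\<Prod>k. 1 - lam * complex_of_real \<tau> ^ Suc k)"
proof -
  interpret geo \<tau> \<Gamma> using assms by unfold_locales auto
  have t: "0 < \<tau>" "\<tau> < 1" using assms by auto
  define T where "T = \<tau> / (1 - \<tau>)"
  define E where "E n = JR \<tau> n (\<lambda>_. 1) / fact n" for n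
  have mc: "multi_cint \<Gamma> n (kernel_det (K1 \<tau> x t) n) = complex_of_real (JR \<tau> n (\<lambda>_. 1))" for n
  proof -
    have "kernel_det (K1 \<tau> x t) n = DETg (Km \<tau> x t) n (\<lambda>_. 1)" by (rule ext, rule kernel_det_DET)
    then show ?thesis using MI_multi_cint[OF MI_DET[where m="\<lambda>_. 1" and x=x and t=t and n=n]] by simp
  qed
  have ft: "fredholm_term \<Gamma> (K1 \<tau> x t) lam n = (- lam) ^ n * complex_of_real (E n)" for n
    by (simp add: fredholm_term_def mc E_def)
  have esl: "(\<lambda>N. es \<tau> {1..N} n) \<longlonglongrightarrow> E n" for n
  proof -
    have "(\<lambda>N. JL \<tau> {1..N} n (\<lambda>_. 1)) \<longlonglongrightarrow> JR \<tau> n (\<lambda>_. 1)" by (rule JL_lim[OF t]) simp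
    moreover have e: "\<And>N. JL \<tau> {1..N} n (\<lambda>_. 1) = fact n * es \<tau> {1..N} n" by (rule JL_one) simp
    ultimately have "(\<lambda>N. fact n * es \<tau> {1..N} n) \<longlonglongrightarrow> JR \<tau> n (\<lambda>_. 1)" by simp
    then have "(\<lambda>N. fact n * es \<tau> {1..N} n / fact n) \<longlonglongrightarrow> JR \<tau> n (\<lambda>_. 1) / fact n"
      by (rule tendsto_divide) auto
    then show ?thesis by (simp add: E_def)
  qed
  define r where "r = 2 * norm lam + 1"
  have r0: "r > 0" unfolding r_def by (simp add: add_nonneg_pos)
  have r: "r > 0" "norm lam / r < 1" using r0 by (auto simp: divide_simps r_def)
  define Mb where "Mb k = exp (r * T) * (norm lam / r) ^ k" for k
  have bnd: "norm ((- lam) ^ k * complex_of_real (es \<tau> {1..N} k)) \<le> Mb k" for k N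
  proof -
    have e0: "0 \<le> es \<tau> {1..N} k" by (rule es_nonneg[OF t(1)])
    have "r ^ k * es \<tau> {1..N} k \<le> exp (r * (\<Sum>a\<in>{1..N}. \<tau> ^ a))"
      by (rule es_bound[OF t(1)]) (use r in auto)
    also have "\<dots> \<le> exp (r * T)"
    proof -
      have "r * (\<Sum>a\<in>{1..N}. \<tau> ^ a) \<le> r * T"
        using sum_pow_bound[OF t, of N] r by (intro mult_left_mono) (auto simp: T_def)
      then show ?thesis by simp
    qed
    finally have h: "r ^ k * es \<tau> {1..N} k \<le> exp (r * T)" .
    have "norm ((- lam) ^ k * complex_of_real (es \<tau> {1..N} k)) = norm lam ^ k * es \<tau> {1..N} k"
      using e0 by (simp add: norm_mult norm_power)
    also have "\<dots> = (norm lam / r) ^ k * (r ^ k * es \<tau> {1..N} k)"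
      using r by (simp add: power_divide field_simps)
    also have "\<dots> \<le> (norm lam / r) ^ k * exp (r * T)"
      by (rule mult_left_mono[OF h]) (use r in simp)
    finally show ?thesis by (simp add: Mb_def mult_ac)
  qed
  have sM: "summable Mb"
    unfolding Mb_def by (rule summable_mult, rule summable_geometric) (use r in auto)
  have tan: "eventually (\<lambda>N. summable (\<lambda>k. norm ((- lam) ^ k * complex_of_real (es \<tau> {1..N} k)))) sequentially \<and>
       summable (\<lambda>k. norm ((- lam) ^ k * complex_of_real (E k))) \<and>
       ((\<lambda>N. suminf (\<lambda>k. (- lam) ^ k * complex_of_real (es \<tau> {1..N} k))) \<longlonglongrightarrow>
          suminf (\<lambda>k. (- lam) ^ k * complex_of_real (E k)))"
  proof (rule tannerys_theorem[OF _ _ sM])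
    show "\<And>k. (\<lambda>N. (- lam) ^ k * complex_of_real (es \<tau> {1..N} k)) \<longlonglongrightarrow> (- lam) ^ k * complex_of_real (E k)"
      by (intro tendsto_intros esl)
    show "\<forall>\<^sub>F (k, N) in at_top \<times>\<^sub>F sequentially. norm ((- lam) ^ k * complex_of_real (es \<tau> {1..N} k)) \<le> Mb k"
      by (rule always_eventually) (use bnd in auto)
  qed simp
  have fin: "suminf (\<lambda>k. (- lam) ^ k * complex_of_real (es \<tau> {1..N} k)) =
             (\<Prod>a\<in>{1..N}. 1 - lam * complex_of_real (\<tau> ^ a))" for N
  proof -
    have "suminf (\<lambda>k. (- lam) ^ k * complex_of_real (es \<tau> {1..N} k)) =
          (\<Sum>k\<le>N. (- lam) ^ k * complex_of_real (es \<tau> {1..N} k))"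
      by (rule suminf_finite) (auto simp: es_zero)
    also have "\<dots> = (\<Prod>a\<in>{1..N}. 1 + (- lam) * complex_of_real (\<tau> ^ a))"
      by (rule es_expand) auto
    finally show ?thesis by simp
  qed
  define f where "f k = 1 - lam * complex_of_real \<tau> ^ Suc k" for k
  have cp: "convergent_prod f"
  proof (rule abs_convergent_prod_imp_convergent_prod, rule summable_imp_abs_convergent_prod)
    have "summable (\<lambda>k. norm lam * \<tau> * \<tau> ^ k)"
      by (rule summable_mult, rule summable_geometric) (use t in auto)
    then show "summable (\<lambda>k. norm (f k - 1))"
      using t by (simp add: f_def norm_mult norm_power mult_ac)
  qed
  have pl: "(\<lambda>N. \<Prod>a\<in>{1..N}. 1 - lam * complex_of_real (\<tau> ^ a)) \<longlonglongrightarrow> prodinf f"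
  proof (rule LIMSEQ_imp_Suc)
    have "(\<Prod>a\<in>{1..Suc n}. 1 - lam * complex_of_real (\<tau> ^ a)) = (\<Prod>i\<le>n. f i)" for n
    proof -
      have "{1..Suc n} = Suc ` {..n}" by (simp add: image_Suc_atMost)
      then show ?thesis by (simp add: prod.reindex f_def)
    qed
    then show "(\<lambda>n. \<Prod>a\<in>{1..Suc n}. 1 - lam * complex_of_real (\<tau> ^ a)) \<longlonglongrightarrow> prodinf f"
      using convergent_prod_LIMSEQ[OF cp] by simp
  qed
  have eqs: "suminf (\<lambda>k. (- lam) ^ k * complex_of_real (E k)) = prodinf f"
  proof -
    have L: "(\<lambda>N. suminf (\<lambda>k. (- lam) ^ k * complex_of_real (es \<tau> {1..N} k))) \<longlonglongrightarrow>
          suminf (\<lambda>k. (- lam) ^ k * complex_of_real (E k))" using tan by blast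
    have e: "(\<lambda>N. suminf (\<lambda>k. (- lam) ^ k * complex_of_real (es \<tau> {1..N} k))) =
             (\<lambda>N. \<Prod>a\<in>{1..N}. 1 - lam * complex_of_real (\<tau> ^ a))" by (rule ext, rule fin)
    show ?thesis using LIMSEQ_unique[OF L[unfolded e] pl] .
  qed
  have "fredholm_term \<Gamma> (K1 \<tau> x t) lam = (\<lambda>k. (- lam) ^ k * complex_of_real (E k))"
    using ft by auto
  moreover have "summable (\<lambda>k. (- lam) ^ k * complex_of_real (E k))"
  proof -
    have "summable (\<lambda>k. norm ((- lam) ^ k * complex_of_real (E k)))" using tan by (rule conjunct1[OF conjunct2])
    then show ?thesis by (rule summable_norm_cancel)
  qed
  moreover have fe: "f = (\<lambda>k. 1 - lam * complex_of_real \<tau> ^ Suc k)" by (rule ext) (simp only: f_def)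
  ultimately show ?thesis
    using eqs unfolding fredholm_det_def by simp
qed


end
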